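(* Let $U>0$, $T\ge0$, $\mu\ge0$, and let $(\gamma,\alpha,\rho_0)$ be a minimizer of $\mathcal{F}$ over $\mathcal{D}$. If $\rho_0=0$ then $\|\gamma\|_{L^1}\ge \mu/(2U)$; if $\rho_0>0$ then $\|\gamma\|_{L^1}\le\mu/(2U)$. Furthermore, if $\mu\le0$, no minimizer has $\rho_0>0$.
   Context: Let $\mathbb{T}^3=[-\pi,\pi]^3$ with periodic identification and normalized Haar measure $dp$. Let $\varepsilon(p)=4\sum_{k=1}^3\sin^2(p_k/2)$. $\mathcal{D}=\{(\gamma,\alpha,\rho_0): \gamma\in L^1(\mathbb{T}^3),\ \gamma\ge0,\ \alpha^2\le\gamma(1+\gamma)\text{ a.e.},\ \rho_0\ge0\}$. With $\beta=\sqrt{(\tfrac12+\gamma)^2-\alpha^2}$, $S(\gamma,\alpha)=\int\big[(\beta+\tfrac12)\ln(\beta+\tfrac12)-(\beta-\tfrac12)\ln(\beta-\tfrac12)\big]dp$, and $\mathcal{F}(\gamma,\alpha,\rho_0)=\int(\varepsilon-\mu)\gamma\,dp-\mu\rho_0-TS(\gamma,\alpha)+\frac U2(\int\alpha)^2+U(\int\gamma)^2+U\rho_0\int\alpha+2U\rho_0\int\gamma+\frac U2\rho_0^2$ (integrals over $\mathbb{T}^3$; entropy term absent at $T=0$). A minimizer is a point of $\mathcal{D}$ attaining $\inf_{\mathcal{D}}\mathcal{F}$. *)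

theory Defs
  imports "HOL-Analysis.Analysis"
begin

text \<open>The torus T^3 = [-pi,pi]^3 (periodic identification is irrelevant for integration).\<close>
definition torus :: "(real^3) set" where
  "torus = {p. \<forall>k. - pi \<le> p $ k \<and> p $ k \<le> pi}"

definition tint :: "(real^3 \<Rightarrow> real) \<Rightarrow> real" where
  "tint f = (LINT p:torus|lebesgue. f p) / (2 * pi) ^ 3"

definition disp :: "real^3 \<Rightarrow> real" where
  "disp p = 4 * (\<Sum>k\<in>UNIV. (sin (p $ k / 2))\<^sup>2)"

definition in_D :: "(real^3 \<Rightarrow> real) \<Rightarrow> (real^3 \<Rightarrow> real) \<Rightarrow> real \<Rightarrow> bool" where
  "in_D \<gamma> \<alpha> \<rho>0 \<longleftrightarrow>
     set_integrable lebesgue torus \<gamma> \<and>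
     set_borel_measurable lebesgue torus \<alpha> \<and>
     (AE p in lebesgue. p \<in> torus \<longrightarrow> 0 \<le> \<gamma> p \<and> (\<alpha> p)\<^sup>2 \<le> \<gamma> p * (1 + \<gamma> p)) \<and>
     0 \<le> \<rho>0"

definition xlnx :: "real \<Rightarrow> real" where
  "xlnx x = (if x \<le> 0 then 0 else x * ln x)"

definition beta :: "(real^3 \<Rightarrow> real) \<Rightarrow> (real^3 \<Rightarrow> real) \<Rightarrow> real^3 \<Rightarrow> real" where
  "beta \<gamma> \<alpha> p = sqrt ((1/2 + \<gamma> p)\<^sup>2 - (\<alpha> p)\<^sup>2)"

definition entropy :: "(real^3 \<Rightarrow> real) \<Rightarrow> (real^3 \<Rightarrow> real) \<Rightarrow> real" where
  "entropy \<gamma> \<alpha> = tint (\<lambda>p. xlnx (beta \<gamma> \<alpha> p + 1/2) - xlnx (beta \<gamma> \<alpha> p - 1/2))"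

definition freeF :: "real \<Rightarrow> real \<Rightarrow> real \<Rightarrow> (real^3 \<Rightarrow> real) \<Rightarrow> (real^3 \<Rightarrow> real) \<Rightarrow> real \<Rightarrow> real" where
  "freeF T \<mu> U \<gamma> \<alpha> \<rho>0 =
     tint (\<lambda>p. (disp p - \<mu>) * \<gamma> p) - \<mu> * \<rho>0 - T * entropy \<gamma> \<alpha>
     + U / 2 * (tint \<alpha>)\<^sup>2 + U * (tint \<gamma>)\<^sup>2 + U * \<rho>0 * tint \<alpha>
     + 2 * U * \<rho>0 * tint \<gamma> + U / 2 * \<rho>0\<^sup>2"

definition is_minimizer :: "real \<Rightarrow> real \<Rightarrow> real \<Rightarrow> (real^3 \<Rightarrow> real) \<Rightarrow> (real^3 \<Rightarrow> real) \<Rightarrow> real \<Rightarrow> bool" where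
  "is_minimizer T \<mu> U \<gamma> \<alpha> \<rho>0 \<longleftrightarrow>
     in_D \<gamma> \<alpha> \<rho>0 \<and>
     (\<forall>g a r. in_D g a r \<longrightarrow> freeF T \<mu> U \<gamma> \<alpha> \<rho>0 \<le> freeF T \<mu> U g a r)"

end

theory Submission
  imports Defs
begin

lemma torus_cbox: "torus = cbox (\<chi> _. - pi) (\<chi> _. pi)"
  unfolding torus_def interval_cbox_cart[symmetric] by (auto simp: less_eq_vec_def)

lemma torus_sets: "torus \<in> sets lebesgue"
  unfolding torus_cbox by simp

lemma torus_fin: "emeasure lebesgue torus < \<infinity>"
  unfolding torus_cbox using emeasure_lborel_cbox_finite by simp

lemma ind_integrable: "integrable lebesgue (\<lambda>p. indicator torus p :: real)"
  using torus_sets torus_fin by simp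

definition ent_h :: "real \<Rightarrow> real" where
  "ent_h b = xlnx (b + 1/2) - xlnx (b - 1/2)"

lemma ent_h_half: "ent_h (1/2) = 0"
  by (simp add: ent_h_def xlnx_def)

lemma ent_h_bounds:
  assumes "b \<ge> 1/2" shows "0 \<le> ent_h b \<and> ent_h b \<le> b + 1/2"
proof (cases "b = 1/2")
  case True then show ?thesis unfolding True by (simp add: ent_h_half)
next
  case False
  define c where "c = b - 1/2"
  have c: "c > 0" using assms False c_def by auto
  have e: "ent_h b = (c+1) * ln (c+1) - c * ln c"
    using c by (simp add: ent_h_def xlnx_def c_def algebra_simps)
  have l1: "ln c \<le> ln (c+1)" using c by simp
  have l0: "0 \<le> ln (c+1)" using c by simp
  have l2: "ln ((c+1)/c) \<le> (c+1)/c - 1" using c by (intro ln_le_minus_one) auto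
  have l3: "ln ((c+1)/c) = ln (c+1) - ln c" using c by (simp add: ln_div)
  have "c * (ln (c+1) - ln c) \<le> c * ((c+1)/c - 1)"
    using l2 l3 c by (intro mult_left_mono) auto
  also have "\<dots> = 1" using c by (simp add: field_simps)
  finally have l4: "c * (ln (c+1) - ln c) \<le> 1" .
  have l5: "ln (c+1) \<le> c" using ln_le_minus_one[of "c+1"] c by simp
  have "0 \<le> c * (ln (c+1) - ln c)" using c l1 by simp
  then show ?thesis using e l4 l5 l0 c_def by (simp add: algebra_simps)
qed

lemma xlnx_deriv: "y > 0 \<Longrightarrow> DERIV xlnx y :> ln y + 1"
proof -
  assume y: "y > 0"
  have ev: "eventually (\<lambda>x. xlnx x = x * ln x) (nhds y)"
    using eventually_nhds_in_open[of "{0<..}" y] y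
    by (auto elim!: eventually_mono simp: xlnx_def)
  have "DERIV (\<lambda>x. x * ln x) y :> ln y + 1"
    using y by (auto intro!: derivative_eq_intros)
  then show ?thesis using DERIV_cong_ev[OF refl ev refl] by simp
qed

lemma ent_h_mono:
  assumes "1/2 \<le> a" "a \<le> b" shows "ent_h a \<le> ent_h b"
proof (cases "a = 1/2")
  case True then show ?thesis using ent_h_bounds[of b] assms unfolding True by (simp add: ent_h_half)
next
  case False
  then have a: "a > 1/2" using assms by auto
  have d: "DERIV ent_h x :> (ln (x+1/2) + 1) - (ln (x - 1/2) + 1)" if "x > 1/2" for x
  proof -
    have "DERIV (\<lambda>x. xlnx (x + 1/2)) x :> (ln (x+1/2) + 1) * 1"
      using that by (intro DERIV_chain2[OF xlnx_deriv]) (auto intro!: derivative_eq_intros)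
    moreover have "DERIV (\<lambda>x. xlnx (x - 1/2)) x :> (ln (x-1/2) + 1) * 1"
      using that by (intro DERIV_chain2[OF xlnx_deriv]) (auto intro!: derivative_eq_intros)
    ultimately have "DERIV (\<lambda>x. xlnx (x + 1/2) - xlnx (x - 1/2)) x :> (ln (x+1/2) + 1) * 1 - (ln (x-1/2) + 1) * 1"
      by (rule DERIV_diff)
    then show ?thesis unfolding ent_h_def[abs_def] by simp
  qed
  show ?thesis
  proof (rule DERIV_nonneg_imp_increasing_open[OF assms(2)])
    show "continuous_on {a..b} ent_h"
    proof (intro continuous_at_imp_continuous_on ballI)
      fix x assume "x \<in> {a..b}"
      then have "x > 1/2" using a by auto
      then show "isCont ent_h x" using d by (blast intro: DERIV_isCont)
    qed
    fix x assume x: "a < x" "x < b"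
    then have "x > 1/2" using a by auto
    then show "\<exists>y. DERIV ent_h x :> y \<and> 0 \<le> y"
      using d by (intro exI[of _ "(ln (x+1/2) + 1) - (ln (x - 1/2) + 1)"]) auto
  qed
qed


lemma tint_alt: "tint f = integral\<^sup>L lebesgue (\<lambda>p. indicator torus p * f p) / (2*pi)^3"
  unfolding tint_def set_lebesgue_integral_def by simp

lemma tint_scale: "tint (\<lambda>p. t * f p) = t * tint f"
  unfolding tint_def by simp

lemma beta_bounds:
  fixes g a :: real
  assumes "0 \<le> g" "a\<^sup>2 \<le> g * (1 + g)"
  shows "1/2 \<le> sqrt ((1/2 + g)\<^sup>2 - a\<^sup>2) \<and> sqrt ((1/2 + g)\<^sup>2 - a\<^sup>2) \<le> 1/2 + g"
proof
  have "1/4 \<le> (1/2 + g)\<^sup>2 - a\<^sup>2" using assms by (simp add: power2_eq_square algebra_simps)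
  then have "sqrt (1/4) \<le> sqrt ((1/2 + g)\<^sup>2 - a\<^sup>2)" by (rule real_sqrt_le_mono)
  moreover have "sqrt (1/4::real) = 1/2" by (simp add: real_sqrt_divide)
  ultimately show "1/2 \<le> sqrt ((1/2 + g)\<^sup>2 - a\<^sup>2)" by simp
  have "(1/2 + g)\<^sup>2 - a\<^sup>2 \<le> (1/2+g)\<^sup>2" by simp
  then have "sqrt ((1/2 + g)\<^sup>2 - a\<^sup>2) \<le> sqrt ((1/2+g)\<^sup>2)" by (rule real_sqrt_le_mono)
  then show "sqrt ((1/2 + g)\<^sup>2 - a\<^sup>2) \<le> 1/2 + g" using assms by simp
qed

lemma ent_h_meas[measurable]: "ent_h \<in> borel_measurable borel"
  unfolding ent_h_def xlnx_def by measurable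

lemma in_D_int: "in_D \<gamma> \<alpha> r \<Longrightarrow> integrable lebesgue (\<lambda>p. indicator torus p * \<gamma> p)"
  unfolding in_D_def set_integrable_def by simp

lemma in_D_meas: "in_D \<gamma> \<alpha> r \<Longrightarrow> (\<lambda>p. indicator torus p * \<alpha> p) \<in> borel_measurable lebesgue"
  unfolding in_D_def set_borel_measurable_def by simp

lemma in_D_AE: "in_D \<gamma> \<alpha> r \<Longrightarrow> AE p in lebesgue. p \<in> torus \<longrightarrow> 0 \<le> \<gamma> p \<and> (\<alpha> p)\<^sup>2 \<le> \<gamma> p * (1 + \<gamma> p)"
  unfolding in_D_def by simp

lemma ent_integrable:
  assumes D: "in_D \<gamma> \<alpha> r"
  shows "integrable lebesgue (\<lambda>p. indicator torus p * ent_h (beta \<gamma> \<alpha> p))"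
proof (rule Bochner_Integration.integrable_bound)
  show "integrable lebesgue (\<lambda>p. indicator torus p + indicator torus p * \<gamma> p :: real)"
    using ind_integrable in_D_int[OF D] by (rule Bochner_Integration.integrable_add)
  have eq: "(\<lambda>p. indicator torus p * ent_h (beta \<gamma> \<alpha> p)) =
     (\<lambda>p. ent_h (sqrt ((1/2 + indicator torus p * \<gamma> p)\<^sup>2 - (indicator torus p * \<alpha> p)\<^sup>2)))"
  proof
    fix p
    have "ent_h (sqrt ((1/2::real)\<^sup>2)) = 0"
      by (subst real_sqrt_abs) (simp add: ent_h_half)
    then show "indicator torus p * ent_h (beta \<gamma> \<alpha> p) =
     ent_h (sqrt ((1/2 + indicator torus p * \<gamma> p)\<^sup>2 - (indicator torus p * \<alpha> p)\<^sup>2))"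
      by (cases "p \<in> torus") (auto simp: beta_def ent_h_half simp del: real_sqrt_abs)
  qed
  have [measurable]: "(\<lambda>p. indicator torus p * \<gamma> p) \<in> borel_measurable lebesgue"
    using in_D_int[OF D] by (rule borel_measurable_integrable)
  have [measurable]: "(\<lambda>p. indicator torus p * \<alpha> p) \<in> borel_measurable lebesgue"
    using in_D_meas[OF D] .
  show "(\<lambda>p. indicator torus p * ent_h (beta \<gamma> \<alpha> p)) \<in> borel_measurable lebesgue"
    unfolding eq by measurable
  show "AE p in lebesgue. norm (indicator torus p * ent_h (beta \<gamma> \<alpha> p))
      \<le> norm (indicator torus p + indicator torus p * \<gamma> p :: real)"
    using in_D_AE[OF D]
  proof eventually_elim
    case (elim p)
    show ?case
    proof (cases "p \<in> torus")
      case True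
      then have h: "0 \<le> \<gamma> p" "(\<alpha> p)\<^sup>2 \<le> \<gamma> p * (1 + \<gamma> p)" using elim by auto
      have b: "1/2 \<le> beta \<gamma> \<alpha> p \<and> beta \<gamma> \<alpha> p \<le> 1/2 + \<gamma> p"
        unfolding beta_def using beta_bounds[OF h] .
      then have "0 \<le> ent_h (beta \<gamma> \<alpha> p) \<and> ent_h (beta \<gamma> \<alpha> p) \<le> 1 + \<gamma> p"
        using ent_h_bounds[of "beta \<gamma> \<alpha> p"] by auto
      then show ?thesis using True h by simp
    qed simp
  qed
qed

lemma in_D_scale:
  assumes D: "in_D \<gamma> \<alpha> r" and t: "\<bar>t\<bar> \<le> 1" and r: "0 \<le> r'"
  shows "in_D \<gamma> (\<lambda>p. t * \<alpha> p) r'"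
proof -
  have m: "(\<lambda>p. indicator torus p * \<alpha> p) \<in> borel_measurable lebesgue" using in_D_meas[OF D] .
  have "(\<lambda>p. indicator torus p * (t * \<alpha> p)) = (\<lambda>p. t * (indicator torus p * \<alpha> p))"
    by (auto simp: algebra_simps)
  then have m2: "(\<lambda>p. indicator torus p * (t * \<alpha> p)) \<in> borel_measurable lebesgue"
    using m by simp
  have t2: "t\<^sup>2 \<le> 1" using t by (metis abs_ge_zero power2_abs power_le_one)
  have "AE p in lebesgue. p \<in> torus \<longrightarrow> 0 \<le> \<gamma> p \<and> (t * \<alpha> p)\<^sup>2 \<le> \<gamma> p * (1 + \<gamma> p)"
    using in_D_AE[OF D]
  proof eventually_elim
    case (elim p)
    have "(t * \<alpha> p)\<^sup>2 = t\<^sup>2 * (\<alpha> p)\<^sup>2" by (simp add: power_mult_distrib)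
    also have "\<dots> \<le> 1 * (\<alpha> p)\<^sup>2" using t2 by (intro mult_right_mono) auto
    finally show ?case using elim by auto
  qed
  then show ?thesis using D m2 r unfolding in_D_def set_borel_measurable_def by simp
qed

lemma entropy_alt: "entropy \<gamma> \<alpha> = tint (\<lambda>p. ent_h (beta \<gamma> \<alpha> p))"
  unfolding entropy_def ent_h_def ..

lemma entropy_mono:
  assumes D: "in_D \<gamma> \<alpha> r" and t: "\<bar>t\<bar> \<le> 1"
  shows "entropy \<gamma> \<alpha> \<le> entropy \<gamma> (\<lambda>p. t * \<alpha> p)"
proof -
  have "0 \<le> r" using D unfolding in_D_def by simp
  then have D2: "in_D \<gamma> (\<lambda>p. t * \<alpha> p) r" using in_D_scale[OF D t] by simp
  have t2: "t\<^sup>2 \<le> 1" using t by (metis abs_ge_zero power2_abs power_le_one)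
  have "integral\<^sup>L lebesgue (\<lambda>p. indicator torus p * ent_h (beta \<gamma> \<alpha> p))
     \<le> integral\<^sup>L lebesgue (\<lambda>p. indicator torus p * ent_h (beta \<gamma> (\<lambda>p. t * \<alpha> p) p))"
  proof (rule integral_mono_AE[OF ent_integrable[OF D] ent_integrable[OF D2]])
    show "AE p in lebesgue. indicator torus p * ent_h (beta \<gamma> \<alpha> p)
       \<le> indicator torus p * ent_h (beta \<gamma> (\<lambda>p. t * \<alpha> p) p)"
      using in_D_AE[OF D]
    proof eventually_elim
      case (elim p)
      show ?case
      proof (cases "p \<in> torus")
        case True
        then have h: "0 \<le> \<gamma> p" "(\<alpha> p)\<^sup>2 \<le> \<gamma> p * (1 + \<gamma> p)" using elim by auto
        have b: "1/2 \<le> beta \<gamma> \<alpha> p"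
          unfolding beta_def using beta_bounds[OF h] by simp
        have "(t * \<alpha> p)\<^sup>2 = t\<^sup>2 * (\<alpha> p)\<^sup>2" by (simp add: power_mult_distrib)
        also have "\<dots> \<le> 1 * (\<alpha> p)\<^sup>2" using t2 by (intro mult_right_mono) auto
        finally have "beta \<gamma> \<alpha> p \<le> beta \<gamma> (\<lambda>p. t * \<alpha> p) p"
          unfolding beta_def by (intro real_sqrt_le_mono) simp
        then show ?thesis using True ent_h_mono[OF b] by simp
      qed simp
    qed
  qed
  then show ?thesis unfolding entropy_alt tint_alt by (simp add: divide_right_mono)
qed

lemma G_facts:
  assumes D: "in_D \<gamma> \<alpha> r"
  shows "tint (\<lambda>p. \<bar>\<gamma> p\<bar>) = tint \<gamma>" "0 \<le> tint \<gamma>"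
    "tint \<gamma> = 0 \<Longrightarrow> tint \<alpha> = 0"
proof -
  have i: "integrable lebesgue (\<lambda>p. indicator torus p * \<gamma> p)" using in_D_int[OF D] .
  have AEn: "AE p in lebesgue. 0 \<le> indicator torus p * \<gamma> p"
    using in_D_AE[OF D] by eventually_elim (auto simp: indicator_def)
  have "integral\<^sup>L lebesgue (\<lambda>p. indicator torus p * \<bar>\<gamma> p\<bar>) = integral\<^sup>L lebesgue (\<lambda>p. indicator torus p * \<gamma> p)"
  proof (rule integral_cong_AE)
    show "(\<lambda>p. indicator torus p * \<gamma> p) \<in> borel_measurable lebesgue"
      using i by (rule borel_measurable_integrable)
    then have "(\<lambda>p. \<bar>indicator torus p * \<gamma> p\<bar>) \<in> borel_measurable lebesgue" by measurable
    moreover have "(\<lambda>p. \<bar>indicator torus p * \<gamma> p\<bar>) = (\<lambda>p. indicator torus p * \<bar>\<gamma> p\<bar>)"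
      by (auto simp: indicator_def)
    ultimately show "(\<lambda>p. indicator torus p * \<bar>\<gamma> p\<bar>) \<in> borel_measurable lebesgue" by simp
    show "AE p in lebesgue. indicator torus p * \<bar>\<gamma> p\<bar> = indicator torus p * \<gamma> p"
      using in_D_AE[OF D] by eventually_elim (auto simp: indicator_def)
  qed
  then show "tint (\<lambda>p. \<bar>\<gamma> p\<bar>) = tint \<gamma>" unfolding tint_alt by simp
  have "0 \<le> integral\<^sup>L lebesgue (\<lambda>p. indicator torus p * \<gamma> p)"
    using AEn by (rule integral_nonneg_AE)
  then show "0 \<le> tint \<gamma>" unfolding tint_alt by simp
  assume "tint \<gamma> = 0"
  then have "integral\<^sup>L lebesgue (\<lambda>p. indicator torus p * \<gamma> p) = 0" unfolding tint_alt by simp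
  then have "AE p in lebesgue. indicator torus p * \<gamma> p = 0"
    using integral_nonneg_eq_0_iff_AE[OF i AEn] by simp
  then have "AE p in lebesgue. indicator torus p * \<alpha> p = 0"
    using in_D_AE[OF D]
  proof eventually_elim
    case (elim p)
    show ?case
    proof (cases "p \<in> torus")
      case True
      then have "(\<alpha> p)\<^sup>2 \<le> 0" using elim by auto
      then show ?thesis by simp
    qed simp
  qed
  then have "integral\<^sup>L lebesgue (\<lambda>p. indicator torus p * \<alpha> p) = 0"
    by (rule integral_eq_zero_AE)
  then show "tint \<alpha> = 0" unfolding tint_alt by simp
qed


theorem corollary4p2:
  fixes T \<mu> U \<rho>0 :: real and \<gamma> \<alpha> :: "real^3 \<Rightarrow> real"
  assumes "U > 0" and "T \<ge> 0"
    and "is_minimizer T \<mu> U \<gamma> \<alpha> \<rho>0"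
  shows "(\<mu> \<ge> 0 \<longrightarrow>
            (\<rho>0 = 0 \<longrightarrow> tint (\<lambda>p. \<bar>\<gamma> p\<bar>) \<ge> \<mu> / (2 * U)) \<and>
            (\<rho>0 > 0 \<longrightarrow> tint (\<lambda>p. \<bar>\<gamma> p\<bar>) \<le> \<mu> / (2 * U)))
         \<and> (\<mu> \<le> 0 \<longrightarrow> \<rho>0 = 0)"
proof -
  have U: "U > 0" and T: "T \<ge> 0" using assms by auto
  from assms(3) have D: "in_D \<gamma> \<alpha> \<rho>0"
    and mn: "\<And>g a r. in_D g a r \<Longrightarrow> freeF T \<mu> U \<gamma> \<alpha> \<rho>0 \<le> freeF T \<mu> U g a r"
    unfolding is_minimizer_def by auto
  define C where "C = tint (\<lambda>p. (disp p - \<mu>) * \<gamma> p)"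
  define G where "G = tint \<gamma>"
  define A where "A = tint \<alpha>"
  define S where "S = entropy \<gamma> \<alpha>"
  have r0: "0 \<le> \<rho>0" using D unfolding in_D_def by simp
  have Fst: "freeF T \<mu> U \<gamma> (\<lambda>p. t * \<alpha> p) r = C - \<mu>*r - T*entropy \<gamma> (\<lambda>p. t*\<alpha> p)
      + U/2*(t*A)\<^sup>2 + U*G\<^sup>2 + U*r*(t*A) + 2*U*r*G + U/2*r\<^sup>2" for t r
    unfolding freeF_def tint_scale C_def G_def A_def by simp
  have F0: "freeF T \<mu> U \<gamma> \<alpha> \<rho>0 = C - \<mu>*\<rho>0 - T*S
      + U/2*A\<^sup>2 + U*G\<^sup>2 + U*\<rho>0*A + 2*U*\<rho>0*G + U/2*\<rho>0\<^sup>2"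
    unfolding freeF_def C_def G_def A_def S_def by simp
  have key: "- \<mu>*\<rho>0 + U/2*A\<^sup>2 + U*\<rho>0*A + 2*U*\<rho>0*G + U/2*\<rho>0\<^sup>2
      \<le> - \<mu>*r + U/2*(t*A)\<^sup>2 + U*r*(t*A) + 2*U*r*G + U/2*r\<^sup>2"
    if t: "\<bar>t\<bar> \<le> 1" and r: "0 \<le> r" for t r
  proof -
    have "freeF T \<mu> U \<gamma> \<alpha> \<rho>0 \<le> freeF T \<mu> U \<gamma> (\<lambda>p. t * \<alpha> p) r"
      by (rule mn[OF in_D_scale[OF D t r]])
    moreover have "T * S \<le> T * entropy \<gamma> (\<lambda>p. t*\<alpha> p)"
      unfolding S_def using entropy_mono[OF D t] T by (rule mult_left_mono)
    ultimately show ?thesis unfolding F0 Fst by linarith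
  qed
  have Gabs: "tint (\<lambda>p. \<bar>\<gamma> p\<bar>) = G" and G0: "0 \<le> G" and GA: "G = 0 \<Longrightarrow> A = 0"
    using G_facts[OF D] unfolding G_def A_def by auto
  have P1: "\<mu> / (2 * U) \<le> G" if z: "\<rho>0 = 0"
  proof (rule ccontr)
    assume "\<not> \<mu> / (2 * U) \<le> G"
    then have "G < \<mu> / (2 * U)" by simp
    then have K: "2*U*G - \<mu> < 0" using U by (simp add: field_simps)
    define s :: real where "s = (if A > 0 then -1 else 1)"
    have s1: "\<bar>s\<bar> \<le> 1" and s2: "(s*A)\<^sup>2 = A\<^sup>2" and s3: "s*A \<le> 0"
      unfolding s_def by (auto simp: power2_eq_square)
    define d where "d = (\<mu> - 2*U*G) / U"
    have d: "d > 0" "U * d = \<mu> - 2*U*G" using K U unfolding d_def by (auto simp: field_simps)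
    have "U/2*A\<^sup>2 \<le> - \<mu>*d + U/2*(s*A)\<^sup>2 + U*d*(s*A) + 2*U*d*G + U/2*d\<^sup>2"
      using key[OF s1, of d] d z by simp
    then have h1: "0 \<le> d * ((2*U*G - \<mu>) + U*d/2) + (U*d)*(s*A)"
      unfolding s2 by (simp add: algebra_simps power2_eq_square)
    have e: "(2*U*G - \<mu>) + U*d/2 = (2*U*G - \<mu>)/2" using d(2) by (simp add: algebra_simps)
    have h2: "0 \<le> d * ((2*U*G - \<mu>)/2) + (U*d)*(s*A)" using h1 unfolding e .
    have "(U*d)*(s*A) \<le> 0"
    proof -
      have "0 \<le> U*d" by (rule less_imp_le[OF mult_pos_pos[OF U d(1)]])
      then show ?thesis using s3 by (rule mult_nonneg_nonpos)
    qed
    moreover note h2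
    moreover have "d * ((2*U*G - \<mu>)/2) < 0" using K by (intro mult_pos_neg[OF d(1)]) simp
    ultimately show False by linarith
  qed
  have P2: "0 \<le> A + \<rho>0" if p: "\<rho>0 > 0"
  proof (rule ccontr)
    assume "\<not> 0 \<le> A + \<rho>0"
    then have n: "A + \<rho>0 < 0" by simp
    then have An: "A < 0" using p by simp
    define t where "t = 1/2 - \<rho>0 / (2*A)"
    have tA: "t * A = A/2 - \<rho>0/2" using An unfolding t_def by (simp add: field_simps)
    have "\<rho>0 / (2*A) \<le> 0" using p An by (simp add: divide_nonneg_neg)
    moreover have "- \<rho>0 / (2*A) \<le> 1/2" using p An n by (simp add: field_simps)
    ultimately have t1: "\<bar>t\<bar> \<le> 1" unfolding t_def by simp
    have "- \<mu>*\<rho>0 + U/2*A\<^sup>2 + U*\<rho>0*A + 2*U*\<rho>0*G + U/2*\<rho>0\<^sup>2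
      \<le> - \<mu>*\<rho>0 + U/2*(t*A)\<^sup>2 + U*\<rho>0*(t*A) + 2*U*\<rho>0*G + U/2*\<rho>0\<^sup>2"
      using key[OF t1 r0] .
    then have "U/2*(A+\<rho>0)\<^sup>2 \<le> U/2*(t*A+\<rho>0)\<^sup>2"
      by (simp add: algebra_simps power2_eq_square)
    also have "(t*A+\<rho>0)\<^sup>2 = (A+\<rho>0)\<^sup>2/4" unfolding tA by (simp add: power2_eq_square field_simps)
    finally have "U/2*(A+\<rho>0)\<^sup>2 \<le> U/2*((A+\<rho>0)\<^sup>2/4)" .
    then have "(A+\<rho>0)\<^sup>2 \<le> (A+\<rho>0)\<^sup>2/4" using U by simp
    moreover have "(A+\<rho>0)\<^sup>2 > 0" using n by simp
    ultimately show False by simp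
  qed
  have P3: "2*U*G - \<mu> + U*(A + \<rho>0) \<le> 0" if p: "\<rho>0 > 0"
  proof (rule ccontr)
    define M where "M = 2*U*G - \<mu> + U*(A + \<rho>0)"
    assume "\<not> 2*U*G - \<mu> + U*(A + \<rho>0) \<le> 0"
    then have M: "M > 0" unfolding M_def by simp
    define d where "d = min \<rho>0 (M/U)"
    have d: "0 < d" "d \<le> \<rho>0" "U*d \<le> M" using M U p unfolding d_def by (auto simp: field_simps min_def)
    have "- \<mu>*\<rho>0 + U/2*A\<^sup>2 + U*\<rho>0*A + 2*U*\<rho>0*G + U/2*\<rho>0\<^sup>2
      \<le> - \<mu>*(\<rho>0-d) + U/2*(1*A)\<^sup>2 + U*(\<rho>0-d)*(1*A) + 2*U*(\<rho>0-d)*G + U/2*(\<rho>0-d)\<^sup>2"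
      using key[of 1 "\<rho>0 - d"] d by simp
    then have "0 \<le> d * (U*d/2 - M)"
      unfolding M_def by (simp add: algebra_simps power2_eq_square)
    then have "0 \<le> U*d/2 - M" using d by (simp add: zero_le_mult_iff)
    then show False using d M by linarith
  qed
  show ?thesis
  proof (intro conjI impI)
    assume "\<rho>0 = 0" then show "\<mu> / (2 * U) \<le> tint (\<lambda>p. \<bar>\<gamma> p\<bar>)" using P1 Gabs by simp
  next
    assume p: "\<rho>0 > 0"
    have "0 \<le> U*(A+\<rho>0)" using P2[OF p] U by simp
    then have "2*U*G - \<mu> \<le> 0" using P3[OF p] by linarith
    then show "tint (\<lambda>p. \<bar>\<gamma> p\<bar>) \<le> \<mu> / (2 * U)" using Gabs U by (simp add: field_simps)
  next
    assume m: "\<mu> \<le> 0"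
    show "\<rho>0 = 0"
    proof (rule ccontr)
      assume "\<rho>0 \<noteq> 0"
      then have p: "\<rho>0 > 0" using r0 by simp
      have a: "U*(A+\<rho>0) \<ge> 0" using P2[OF p] U by simp
      have "U*G \<ge> 0" using G0 U by simp
      then have "U*G = 0" using P3[OF p] a m by linarith
      then have G: "G = 0" using U by simp
      then have "A = 0" by (rule GA)
      then have "U*\<rho>0 \<le> 0" using P3[OF p] G m by simp
      moreover have "U*\<rho>0 > 0" using U p by simp
      ultimately show False by linarith
    qed
  qed
qed

end
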